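(* Algorithm $\mathsf{LA}$ is deterministic and uses $O(n)$ queries to $f$. On every instance $(f,V,B)$ it returns a set $S$ with $c(S)\le B$ and $$\mathrm{opt}\le 19\,f(S),$$ where $\mathrm{opt}=\max\{f(T):T\subseteq V,\ c(T)\le B\}$.
   Context: Setting: $V$ is a finite ground set of size $n$. $f:2^V\to\mathbb{R}_{\ge 0}$ is a non-negative submodular set function with $f(\emptyset)=0$. Each $e\in V$ has a cost $c(e)>0$, and $c(S)=\sum_{e\in S}c(e)$. $B>0$ is a budget, and $c(e)\le B$ for every $e\in V$. A query is one evaluation of $f$ on a set. The notation $f(e\mid S)=f(S\cup\{e\})-f(S)$ is used. Algorithm $\mathsf{LA}$ on $(f,V,B)$ runs as follows. 1. Set $V_1=\{e\in V: c(e)\le B/2\}$ and $X=Y=\emptyset$. Let $e_{\max}\in\arg\max_{e\in V}f(e)$. 2. Main loop: process each $e\in V_1$ once, in an arbitrary fixed order. Among the sets $Z\in\{X,Y\}$ satisfying $f(e\mid Z)/c(e)\ge f(Z)/B$, choose one maximizing $f(e\mid Z)/c(e)$, breaking ties arbitrarily. If such a $Z$ exists, add $e$ to $Z$. 3. After the loop, for $T\in\{X,Y\}$ let $T(j)$ denote the set of the last $j$ elements added to $T$. Let $X'$ be the set $X(j)$ of largest cost among those with $0\le j\le|X|$ and $c(X(j))\le B$. Define $Y'$ from $Y$ in the same way. 4. Return the set $S$ among $X'$, $Y'$ and $\{e_{\max}\}$ with the largest $f$ value. *)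

theory Defs
  imports Complex_Main
begin

definition submodular_on :: "'a set \<Rightarrow> ('a set \<Rightarrow> real) \<Rightarrow> bool" where
  "submodular_on V f \<longleftrightarrow>
     (\<forall>A B. A \<subseteq> V \<longrightarrow> B \<subseteq> V \<longrightarrow> f (A \<union> B) + f (A \<inter> B) \<le> f A + f B)"

text \<open>A valid instance: ground set V = set vs (vs lists V without repetition, fixing the
  arbitrary processing order), f non-negative submodular with f {} = 0, positive costs
  each at most the budget B > 0.\<close>
definition valid_instance ::
  "('a set \<Rightarrow> real) \<Rightarrow> ('a \<Rightarrow> real) \<Rightarrow> real \<Rightarrow> 'a list \<Rightarrow> bool" where
  "valid_instance f c B vs \<longleftrightarrow>
     distinct vs \<and> vs \<noteq> [] \<and>
     submodular_on (set vs) f \<and> (\<forall>S. S \<subseteq> set vs \<longrightarrow> 0 \<le> f S) \<and> f {} = 0 \<and>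
     0 < B \<and> (\<forall>e\<in>set vs. 0 < c e \<and> c e \<le> B)"

definition opt :: "('a set \<Rightarrow> real) \<Rightarrow> ('a \<Rightarrow> real) \<Rightarrow> real \<Rightarrow> 'a set \<Rightarrow> real" where
  "opt f c B V = Max {f T | T. T \<subseteq> V \<and> sum c T \<le> B}"

section \<open>Algorithm LA, with every evaluation of f counted as one query\<close>

text \<open>Loop state: (xs, ys, fX, fY, q, i) where xs / ys hold X / Y in reverse order of
  insertion (most recently added first), fX = f X and fY = f Y are the values obtained
  from earlier queries, q is the number of queries so far, i the step index.
  tb i decides ties at step i (True: prefer X).\<close>
definition la_step ::
  "('a set \<Rightarrow> real) \<Rightarrow> ('a \<Rightarrow> real) \<Rightarrow> real \<Rightarrow> (nat \<Rightarrow> bool) \<Rightarrow>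
   'a list \<times> 'a list \<times> real \<times> real \<times> nat \<times> nat \<Rightarrow> 'a \<Rightarrow>
   'a list \<times> 'a list \<times> real \<times> real \<times> nat \<times> nat" where
  "la_step f c B tb st e =
     (case st of (xs, ys, fx, fy, q, i) \<Rightarrow>
       (let fxe = f (insert e (set xs));      \<comment> \<open>query\<close>
            fye = f (insert e (set ys));      \<comment> \<open>query\<close>
            gx = (fxe - fx) / c e;
            gy = (fye - fy) / c e;
            okx = (fx / B \<le> gx);
            oky = (fy / B \<le> gy);
            toX = (okx \<and> (\<not> oky \<or> gy < gx \<or> (gx = gy \<and> tb i)));
            toY = (oky \<and> \<not> toX)
        in if toX then (e # xs, ys, fxe, fy, q + 2, Suc i)
           else if toY then (xs, e # ys, fx, fye, q + 2, Suc i)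
           else (xs, ys, fx, fy, q + 2, Suc i)))"

definition la_loop ::
  "('a set \<Rightarrow> real) \<Rightarrow> ('a \<Rightarrow> real) \<Rightarrow> real \<Rightarrow> (nat \<Rightarrow> bool) \<Rightarrow> 'a list \<Rightarrow>
   'a list \<times> 'a list \<times> real \<times> real \<times> nat \<times> nat" where
  "la_loop f c B tb vs =
     foldl (la_step f c B tb) ([], [], f {}, f {}, 1, 0) (filter (\<lambda>e. c e \<le> B / 2) vs)"

definition emax_scan :: "('a set \<Rightarrow> real) \<Rightarrow> 'a list \<Rightarrow> 'a \<times> real \<times> nat" where
  "emax_scan f vs =
     foldl (\<lambda>(b, fb, q) e. let fe = f {e} in if fb < fe then (e, fe, Suc q) else (b, fb, Suc q))
           (hd vs, f {hd vs}, 1) (tl vs)"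

text \<open>Given T stored most-recent-first in zs, T(j) = set (take j zs) is the set of the last j
  elements added; return the T(j) of largest cost among 0 \<le> j \<le> |T| with c(T(j)) \<le> B.\<close>
definition last_feasible :: "('a \<Rightarrow> real) \<Rightarrow> real \<Rightarrow> 'a list \<Rightarrow> 'a set" where
  "last_feasible c B zs =
     set (take (arg_max (\<lambda>j. sum c (set (take j zs)))
                        (\<lambda>j. j \<le> length zs \<and> sum c (set (take j zs)) \<le> B)) zs)"

text \<open>Algorithm LA: returns (S, total number of queries).\<close>
definition LA ::
  "('a set \<Rightarrow> real) \<Rightarrow> ('a \<Rightarrow> real) \<Rightarrow> real \<Rightarrow> (nat \<Rightarrow> bool) \<Rightarrow> 'a list \<Rightarrow> 'a set \<times> nat" where
  "LA f c B tb vs =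
     (case emax_scan f vs of (em, fem, q1) \<Rightarrow>
      case la_loop f c B tb vs of (xs, ys, fx, fy, q2, i) \<Rightarrow>
        (let X' = last_feasible c B xs;
             Y' = last_feasible c B ys;
             fX' = f X';    \<comment> \<open>query\<close>
             fY' = f Y';    \<comment> \<open>query\<close>
             q = q1 + q2 + 2
         in if fY' \<le> fX' \<and> fem \<le> fX' then (X', q)
            else if fem \<le> fY' then (Y', q)
            else ({em}, q)))"

end

theory Submission
  imports Defs
begin

fun chn :: "('a set \<Rightarrow> real) \<Rightarrow> ('a \<Rightarrow> real) \<Rightarrow> real \<Rightarrow> 'a list \<Rightarrow> bool" where
  "chn f c B [] = True"
| "chn f c B (e # xs) = (chn f c B xs \<and> e \<notin> set xs \<and>
      c e * f (set xs) / B \<le> f (insert e (set xs)) - f (set xs))"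

lemma chn_distinct: "chn f c B zs \<Longrightarrow> distinct zs"
  by (induction zs) auto

locale inst =
  fixes f :: "'a set \<Rightarrow> real" and c :: "'a \<Rightarrow> real" and B :: real and V :: "'a set"
  assumes fin: "finite V" and sub: "submodular_on V f"
    and nonneg: "\<And>S. S \<subseteq> V \<Longrightarrow> 0 \<le> f S"
    and f0: "f {} = 0" and Bpos: "0 < B"
    and cpos: "\<And>e. e \<in> V \<Longrightarrow> 0 < c e" and cle: "\<And>e. e \<in> V \<Longrightarrow> c e \<le> B"
begin

lemma submod: "A \<subseteq> V \<Longrightarrow> C \<subseteq> V \<Longrightarrow> f (A \<union> C) + f (A \<inter> C) \<le> f A + f C"
  using sub unfolding submodular_on_def by blast

lemma subadd: "A \<subseteq> V \<Longrightarrow> C \<subseteq> V \<Longrightarrow> A \<inter> C = {} \<Longrightarrow> f (A \<union> C) \<le> f A + f C"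
  using submod[of A C] f0 by simp

lemma dimret:
  assumes "P \<subseteq> X" "X \<subseteq> V" "u \<in> V" "u \<notin> X"
  shows "f (insert u X) - f X \<le> f (insert u P) - f P"
proof -
  have "insert u P \<union> X = insert u X" "insert u P \<inter> X = P" using assms by auto
  moreover have "insert u P \<subseteq> V" using assms by auto
  ultimately have "f (insert u X) + f P \<le> f (insert u P) + f X"
    using submod[of "insert u P" X] assms by auto
  then show ?thesis by linarith
qed

lemma csum_nonneg: "A \<subseteq> V \<Longrightarrow> 0 \<le> sum c A"
  by (rule sum_nonneg) (auto dest: cpos intro: less_imp_le)

lemma chain_gain:
  "chn f c B zs \<Longrightarrow> set zs \<subseteq> V \<Longrightarrow>
   sum c (set (take j zs)) * f (set (drop j zs)) / B \<le> f (set zs) - f (set (drop j zs))"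
proof (induction zs arbitrary: j)
  case Nil thus ?case by simp
next
  case (Cons e zs)
  show ?case
  proof (cases j)
    case 0 thus ?thesis by simp
  next
    case (Suc j')
    let ?T = "set (take j' zs)" let ?D = "set (drop j' zs)" let ?Z = "set zs"
    have ch: "chn f c B zs" "e \<notin> ?Z" "c e * f ?Z / B \<le> f (insert e ?Z) - f ?Z"
      using Cons.prems by auto
    have sZ: "?Z \<subseteq> V" using Cons.prems by auto
    have IH: "sum c ?T * f ?D / B \<le> f ?Z - f ?D" using Cons.IH ch sZ by auto
    have TZ: "?T \<subseteq> ?Z" by (meson set_take_subset)
    have DZ: "?D \<subseteq> ?Z" by (meson set_drop_subset)
    have fD: "0 \<le> f ?D" using nonneg DZ sZ by blast
    have cT: "0 \<le> sum c ?T" using csum_nonneg TZ sZ by blast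
    have "0 \<le> sum c ?T * f ?D / B" using fD cT Bpos by simp
    hence DleZ: "f ?D \<le> f ?Z" using IH by linarith
    have ce: "0 < c e" using Cons.prems cpos by auto
    have "c e * f ?D \<le> c e * f ?Z" using DleZ ce by simp
    hence m: "c e * f ?D / B \<le> c e * f ?Z / B" using Bpos by (simp add: divide_right_mono)
    have eT: "e \<notin> ?T" using ch TZ by blast
    have sm: "sum c (set (take j (e#zs))) = c e + sum c ?T" using Suc eT by simp
    have "sum c (set (take j (e#zs))) * f (set (drop j (e#zs))) / B
          = c e * f ?D / B + sum c ?T * f ?D / B" using Suc sm
      by (simp add: distrib_right add_divide_distrib)
    then show ?thesis using m IH ch Suc by simp
  qed
qed

lemma lf:
  assumes ch: "chn f c B zs" and sV: "set zs \<subseteq> V" and half: "\<forall>e\<in>set zs. c e \<le> B/2"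
  shows "last_feasible c B zs \<subseteq> set zs \<and> sum c (last_feasible c B zs) \<le> B \<and>
         f (set zs) \<le> 3 * f (last_feasible c B zs)"
proof -
  define g where "g = (\<lambda>j. sum c (set (take j zs)))"
  define P where "P = (\<lambda>j. j \<le> length zs \<and> g j \<le> B)"
  have dist: "distinct zs" using ch by (rule chn_distinct)
  have gmono: "g j \<le> g j'" if "j \<le> j'" for j j'
  proof -
    have "set (take j zs) \<subseteq> set (take j' zs)" using that by (rule set_take_subset_set_take)
    moreover have "set (take j' zs) \<subseteq> V" using sV by (meson set_take_subset subset_trans)
    ultimately show ?thesis unfolding g_def
      by (intro sum_mono2) (auto dest: cpos intro: less_imp_le)
  qed
  have gstep: "g (Suc j) = g j + c (zs!j)" if "j < length zs" for j
  proof -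
    have tk: "take (Suc j) zs = take j zs @ [zs!j]" using that by (simp add: take_Suc_conv_app_nth)
    have "distinct (take (Suc j) zs)" using dist by simp
    hence "zs!j \<notin> set (take j zs)" using tk by simp
    thus ?thesis unfolding g_def using tk by simp
  qed
  define k where "k = Max {j. P j}"
  have finP: "finite {j. P j}" unfolding P_def by simp
  have P0: "P 0" unfolding P_def g_def using Bpos by simp
  have Pk: "P k" unfolding k_def using finP P0 Max_in[of "{j. P j}"] by auto
  have kmax: "y \<le> k" if "P y" for y unfolding k_def using finP that by simp
  define j where "j = arg_max g P"
  have jprop: "P j \<and> (\<forall>y. P y \<longrightarrow> g y \<le> g j)" unfolding j_def
    apply (rule arg_maxI[where P=P and f=g and x=k])
    using Pk kmax gmono by (auto simp: not_less)
  have lfeq: "last_feasible c B zs = set (take j zs)"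
    unfolding last_feasible_def j_def g_def P_def by simp
  have TV: "set (take j zs) \<subseteq> V" using sV by (meson set_take_subset subset_trans)
  have RV: "set (drop j zs) \<subseteq> V" using sV by (meson set_drop_subset subset_trans)
  have fT: "0 \<le> f (set (take j zs))" using TV nonneg by blast
  have fR: "0 \<le> f (set (drop j zs))" using RV nonneg by blast
  have main: "f (set zs) \<le> 3 * f (set (take j zs))"
  proof (cases "j < length zs")
    case False
    hence "take j zs = zs" by simp
    thus ?thesis using fT by simp
  next
    case True
    have zV: "zs!j \<in> set zs" using True by simp
    hence cz: "0 < c (zs!j)" "c (zs!j) \<le> B/2" using sV cpos half by auto
    have "\<not> P (Suc j)"
    proof
      assume "P (Suc j)"
      hence "g (Suc j) \<le> g j" using jprop by blast
      thus False using gstep[OF True] cz by simp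
    qed
    hence "g (Suc j) > B" unfolding P_def using True by auto
    hence gj: "g j \<ge> B/2" using gstep[OF True] cz by simp
    let ?T = "set (take j zs)" let ?R = "set (drop j zs)"
    have cg: "g j * f ?R / B \<le> f (set zs) - f ?R"
      using chain_gain[OF ch sV, of j] unfolding g_def by simp
    have "(B/2) * f ?R \<le> g j * f ?R" using gj fR by (rule mult_right_mono)
    hence "(B/2) * f ?R / B \<le> g j * f ?R / B" using Bpos by (intro divide_right_mono) auto
    moreover have "(B/2) * f ?R / B = f ?R / 2" using Bpos by simp
    ultimately have h1: "f ?R / 2 \<le> f (set zs) - f ?R" using cg by linarith
    have un: "?T \<union> ?R = set zs" by (metis append_take_drop_id set_append)
    have dj: "?T \<inter> ?R = {}" using dist by (simp add: set_take_disj_set_drop_if_distinct)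
    have "f (set zs) \<le> f ?T + f ?R" using subadd[OF TV RV dj] un by simp
    with h1 show ?thesis by linarith
  qed
  show ?thesis using lfeq jprop main unfolding P_def g_def
    by (auto dest: set_take_subset[THEN subsetD])
qed

lemma union_bound:
  assumes "finite A" "A \<subseteq> V" "S \<subseteq> V" "A \<inter> S = {}"
  shows "f (A \<union> S) \<le> f S + (\<Sum>u\<in>A. f (insert u S) - f S)"
  using assms
proof (induction A rule: finite_induct)
  case empty thus ?case by simp
next
  case (insert a A)
  let ?M = "insert a S" let ?N = "A \<union> S"
  have MV: "?M \<subseteq> V" "?N \<subseteq> V" using insert.prems by auto
  have eq: "?M \<union> ?N = insert a A \<union> S" "?M \<inter> ?N = S" using insert.hyps insert.prems by auto
  have "f (insert a A \<union> S) + f S \<le> f ?M + f ?N" using submod[OF MV] eq by simp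
  moreover have "f ?N \<le> f S + (\<Sum>u\<in>A. f (insert u S) - f S)" using insert.IH insert.prems by auto
  ultimately show ?case using insert.hyps by simp
qed

lemma side_bound:
  assumes "finite A" "A \<subseteq> V" "X \<subseteq> V" "A \<inter> X = {}" "sum c A \<le> B"
    and Q: "\<forall>u\<in>A. \<exists>P\<subseteq>X. f (insert u P) - f P \<le> c u * f X / B + h u"
  shows "f (A \<union> X) \<le> 2 * f X + sum h A"
proof -
  have "f (A \<union> X) \<le> f X + (\<Sum>u\<in>A. f (insert u X) - f X)"
    using union_bound assms by blast
  also have "(\<Sum>u\<in>A. f (insert u X) - f X) \<le> (\<Sum>u\<in>A. c u * f X / B + h u)"
  proof (rule sum_mono)
    fix u assume u: "u \<in> A"
    then obtain P where P: "P \<subseteq> X" "f (insert u P) - f P \<le> c u * f X / B + h u" using Q by blast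
    have "f (insert u X) - f X \<le> f (insert u P) - f P"
      using dimret[OF P(1) assms(3)] u assms(2,4) by blast
    with P show "f (insert u X) - f X \<le> c u * f X / B + h u" by linarith
  qed
  also have "(\<Sum>u\<in>A. c u * f X / B + h u) = sum c A * f X / B + sum h A"
    by (simp add: sum.distrib sum_distrib_right sum_divide_distrib)
  also have "sum c A * f X / B \<le> f X"
  proof -
    have "0 \<le> f X" using nonneg assms by blast
    hence "sum c A * f X \<le> B * f X" using assms(5) by (simp add: mult_right_mono)
    thus ?thesis using Bpos by (simp add: divide_le_eq mult.commute)
  qed
  finally show ?thesis by linarith
qed

definition Inv :: "'a set \<Rightarrow> 'a list \<Rightarrow> 'a list \<Rightarrow> real \<Rightarrow> real \<Rightarrow> bool" where
"Inv D xs ys fx fy \<longleftrightarrow>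
  fx = f (set xs) \<and> fy = f (set ys) \<and> D \<subseteq> V \<and> set xs \<subseteq> D \<and> set ys \<subseteq> D \<and>
  set xs \<inter> set ys = {} \<and> chn f c B xs \<and> chn f c B ys \<and>
  (\<exists>gX gY. (\<forall>u\<in>set xs. 0 \<le> gX u) \<and> (\<forall>u\<in>set ys. 0 \<le> gY u) \<and>
     sum gX (set xs) = f (set xs) \<and> sum gY (set ys) = f (set ys) \<and>
     (\<forall>u\<in>D - set xs. \<exists>P\<subseteq>set xs. f (insert u P) - f P \<le> c u * f (set xs) / B + (if u\<in>set ys then gY u else 0)) \<and>
     (\<forall>u\<in>D - set ys. \<exists>P\<subseteq>set ys. f (insert u P) - f P \<le> c u * f (set ys) / B + (if u\<in>set xs then gX u else 0)))"

lemma Inv_swap: "Inv D xs ys fx fy \<Longrightarrow> Inv D ys xs fy fx"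
  unfolding Inv_def by blast

lemma Inv_addX:
  assumes I: "Inv D xs ys fx fy" and e: "e \<in> V" "e \<notin> D"
    and okx: "c e * f (set xs) / B \<le> f (insert e (set xs)) - f (set xs)"
    and yb: "f (insert e (set ys)) - f (set ys) \<le> c e * f (set ys) / B + (f (insert e (set xs)) - f (set xs))"
  shows "Inv (insert e D) (e # xs) ys (f (insert e (set xs))) fy"
proof -
  let ?X = "set xs" let ?Y = "set ys" let ?a = "f (insert e ?X) - f ?X"
  from I obtain gX gY where
    b: "fx = f ?X" "fy = f ?Y" "D \<subseteq> V" "?X \<subseteq> D" "?Y \<subseteq> D" "?X \<inter> ?Y = {}" "chn f c B xs" "chn f c B ys"
    and g: "\<forall>u\<in>?X. 0 \<le> gX u" "\<forall>u\<in>?Y. 0 \<le> gY u" "sum gX ?X = f ?X" "sum gY ?Y = f ?Y"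
    and QX: "\<forall>u\<in>D - ?X. \<exists>P\<subseteq>?X. f (insert u P) - f P \<le> c u * f ?X / B + (if u\<in>?Y then gY u else 0)"
    and QY: "\<forall>u\<in>D - ?Y. \<exists>P\<subseteq>?Y. f (insert u P) - f P \<le> c u * f ?Y / B + (if u\<in>?X then gX u else 0)"
    unfolding Inv_def by blast
  have XV: "?X \<subseteq> V" using b by blast
  have eX: "e \<notin> ?X" "e \<notin> ?Y" using b e by auto
  have ce: "0 < c e" using e cpos by auto
  have fX: "0 \<le> f ?X" using XV nonneg by blast
  have a0: "0 \<le> ?a"
  proof -
    have "0 \<le> c e * f ?X / B" using ce fX Bpos by simp
    thus ?thesis using okx by linarith
  qed
  define gX' where "gX' = gX(e := ?a)"
  have s1: "sum gX' (insert e ?X) = f (insert e ?X)"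
  proof -
    have "sum gX' (insert e ?X) = gX' e + sum gX' ?X" using eX by simp
    also have "sum gX' ?X = sum gX ?X" unfolding gX'_def using eX by (intro sum.cong) auto
    finally show ?thesis using g unfolding gX'_def by simp
  qed
  have mono: "c u * f ?X / B \<le> c u * f (insert e ?X) / B" if "u \<in> V" for u
  proof -
    have "c u * f ?X \<le> c u * f (insert e ?X)" using cpos[OF that] a0 by simp
    thus ?thesis using Bpos by (intro divide_right_mono) auto
  qed
  have QX': "\<forall>u\<in>insert e D - set (e#xs). \<exists>P\<subseteq>set (e#xs). f (insert u P) - f P \<le> c u * f (set (e#xs)) / B + (if u\<in>?Y then gY u else 0)"
  proof
    fix u assume u: "u \<in> insert e D - set (e#xs)"
    hence uD: "u \<in> D - ?X" by auto
    then obtain P where P: "P \<subseteq> ?X" "f (insert u P) - f P \<le> c u * f ?X / B + (if u\<in>?Y then gY u else 0)"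
      using QX by blast
    have "u \<in> V" using uD b by auto
    then show "\<exists>P\<subseteq>set (e#xs). f (insert u P) - f P \<le> c u * f (set (e#xs)) / B + (if u\<in>?Y then gY u else 0)"
      using P mono[of u] by (intro exI[of _ P]) auto
  qed
  have QY': "\<forall>u\<in>insert e D - ?Y. \<exists>P\<subseteq>?Y. f (insert u P) - f P \<le> c u * f ?Y / B + (if u\<in>set (e#xs) then gX' u else 0)"
  proof
    fix u assume u: "u \<in> insert e D - ?Y"
    show "\<exists>P\<subseteq>?Y. f (insert u P) - f P \<le> c u * f ?Y / B + (if u\<in>set (e#xs) then gX' u else 0)"
    proof (cases "u = e")
      case True
      then show ?thesis using yb unfolding gX'_def by (intro exI[of _ ?Y]) simp
    next
      case False
      hence uD: "u \<in> D - ?Y" using u by auto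
      then obtain P where P: "P \<subseteq> ?Y" "f (insert u P) - f P \<le> c u * f ?Y / B + (if u\<in>?X then gX u else 0)"
        using QY by blast
      then show ?thesis using False unfolding gX'_def by (intro exI[of _ P]) auto
    qed
  qed
  have g': "\<forall>u\<in>set (e#xs). 0 \<le> gX' u" using g a0 unfolding gX'_def by auto
  show ?thesis unfolding Inv_def
    using b eX e okx s1 g' g QX' QY' by (simp only: list.set) (intro conjI exI[of _ gX'] exI[of _ gY]; auto)
qed

lemma Inv_none:
  assumes I: "Inv D xs ys fx fy" and e: "e \<in> V" "e \<notin> D"
    and nx: "f (insert e (set xs)) - f (set xs) < c e * f (set xs) / B"
    and ny: "f (insert e (set ys)) - f (set ys) < c e * f (set ys) / B"
  shows "Inv (insert e D) xs ys fx fy"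
proof -
  let ?X = "set xs" let ?Y = "set ys"
  from I obtain gX gY where
    b: "fx = f ?X" "fy = f ?Y" "D \<subseteq> V" "?X \<subseteq> D" "?Y \<subseteq> D" "?X \<inter> ?Y = {}" "chn f c B xs" "chn f c B ys"
    and g: "\<forall>u\<in>?X. 0 \<le> gX u" "\<forall>u\<in>?Y. 0 \<le> gY u" "sum gX ?X = f ?X" "sum gY ?Y = f ?Y"
    and QX: "\<forall>u\<in>D - ?X. \<exists>P\<subseteq>?X. f (insert u P) - f P \<le> c u * f ?X / B + (if u\<in>?Y then gY u else 0)"
    and QY: "\<forall>u\<in>D - ?Y. \<exists>P\<subseteq>?Y. f (insert u P) - f P \<le> c u * f ?Y / B + (if u\<in>?X then gX u else 0)"
    unfolding Inv_def by blast
  have eX: "e \<notin> ?X" "e \<notin> ?Y" using b e by auto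
  have QX': "\<forall>u\<in>insert e D - ?X. \<exists>P\<subseteq>?X. f (insert u P) - f P \<le> c u * f ?X / B + (if u\<in>?Y then gY u else 0)"
  proof
    fix u assume u: "u \<in> insert e D - ?X"
    show "\<exists>P\<subseteq>?X. f (insert u P) - f P \<le> c u * f ?X / B + (if u\<in>?Y then gY u else 0)"
    proof (cases "u = e")
      case True thus ?thesis using nx eX by (intro exI[of _ ?X]) auto
    next
      case False thus ?thesis using QX u by auto
    qed
  qed
  have QY': "\<forall>u\<in>insert e D - ?Y. \<exists>P\<subseteq>?Y. f (insert u P) - f P \<le> c u * f ?Y / B + (if u\<in>?X then gX u else 0)"
  proof
    fix u assume u: "u \<in> insert e D - ?Y"
    show "\<exists>P\<subseteq>?Y. f (insert u P) - f P \<le> c u * f ?Y / B + (if u\<in>?X then gX u else 0)"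
    proof (cases "u = e")
      case True thus ?thesis using ny eX by (intro exI[of _ ?Y]) auto
    next
      case False thus ?thesis using QY u by auto
    qed
  qed
  show ?thesis unfolding Inv_def
    using b e g QX' QY' by (intro conjI exI[of _ gX] exI[of _ gY]; auto)
qed

lemma Inv_step:
  assumes I: "Inv D xs ys fx fy" and e: "e \<in> V" "e \<notin> D"
    and st: "la_step f c B tb (xs,ys,fx,fy,q,i) e = (xs',ys',fx',fy',q',i')"
  shows "Inv (insert e D) xs' ys' fx' fy'"
proof -
  let ?X = "set xs" let ?Y = "set ys"
  define a where "a = f (insert e ?X) - f ?X"
  define b where "b = f (insert e ?Y) - f ?Y"
  have fx: "fx = f ?X" and fy: "fy = f ?Y" using I unfolding Inv_def by auto
  have ce: "0 < c e" using e cpos by auto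
  have XV: "?X \<subseteq> V" "?Y \<subseteq> V" using I unfolding Inv_def by auto
  have f0s: "0 \<le> f ?X" "0 \<le> f ?Y" using XV nonneg by auto
  define okx where "okx = (c e * f ?X / B \<le> a)"
  define oky where "oky = (c e * f ?Y / B \<le> b)"
  have ox: "(fx / B \<le> (f (insert e ?X) - fx) / c e) = okx"
    unfolding okx_def a_def fx using ce Bpos by (simp add: pos_le_divide_eq mult.commute)
  have oy: "(fy / B \<le> (f (insert e ?Y) - fy) / c e) = oky"
    unfolding oky_def b_def fy using ce Bpos by (simp add: pos_le_divide_eq mult.commute)
  have lt: "((f (insert e ?Y) - fy) / c e < (f (insert e ?X) - fx) / c e) = (b < a)"
    unfolding a_def b_def fx fy using ce by (simp add: divide_less_cancel)
  have eq: "((f (insert e ?X) - fx) / c e = (f (insert e ?Y) - fy) / c e) = (a = b)"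
    unfolding a_def b_def fx fy using ce by simp
  define toX where "toX = (okx \<and> (\<not> oky \<or> b < a \<or> (a = b \<and> tb i)))"
  have step: "la_step f c B tb (xs,ys,fx,fy,q,i) e =
     (if toX then (e # xs, ys, f (insert e ?X), fy, q + 2, Suc i)
      else if oky \<and> \<not> toX then (xs, e # ys, fx, f (insert e ?Y), q + 2, Suc i)
      else (xs, ys, fx, fy, q + 2, Suc i))"
    unfolding la_step_def Let_def toX_def using ox oy lt eq by simp
  show ?thesis
  proof (cases toX)
    case True
    hence r: "xs' = e # xs" "ys' = ys" "fx' = f (insert e ?X)" "fy' = fy" using st step by auto
    have o1: "c e * f ?X / B \<le> a" using True unfolding toX_def okx_def by simp
    have "0 \<le> c e * f ?X / B" "0 \<le> c e * f ?Y / B" using ce f0s Bpos by auto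
    hence o2: "b \<le> c e * f ?Y / B + a" using True o1 unfolding toX_def oky_def by auto
    show ?thesis unfolding r using Inv_addX[OF I e] o1 o2 unfolding a_def b_def by blast
  next
    case nX: False
    show ?thesis
    proof (cases oky)
      case True
      hence r: "xs' = xs" "ys' = e # ys" "fx' = fx" "fy' = f (insert e ?Y)" using st step nX by auto
      have o1: "c e * f ?Y / B \<le> b" using True unfolding oky_def by simp
      have "0 \<le> c e * f ?X / B" "0 \<le> c e * f ?Y / B" using ce f0s Bpos by auto
      hence o2: "a \<le> c e * f ?X / B + b" using True o1 nX unfolding toX_def okx_def by auto
      show ?thesis unfolding r using Inv_swap[OF Inv_addX[OF Inv_swap[OF I] e]] o1 o2 unfolding a_def b_def by blast
    next
      case False
      hence r: "xs' = xs" "ys' = ys" "fx' = fx" "fy' = fy" using st step nX by auto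
      have "\<not> okx" using False nX unfolding toX_def by auto
      thus ?thesis unfolding r using Inv_none[OF I e] False unfolding okx_def oky_def a_def b_def by auto
    qed
  qed
qed

lemma Inv_loop:
  "Inv D xs ys fx fy \<Longrightarrow> set ws \<subseteq> V \<Longrightarrow> distinct ws \<Longrightarrow> set ws \<inter> D = {} \<Longrightarrow>
   foldl (la_step f c B tb) (xs,ys,fx,fy,q,i) ws = (xs',ys',fx',fy',q',i') \<Longrightarrow>
   Inv (D \<union> set ws) xs' ys' fx' fy'"
proof (induction ws arbitrary: D xs ys fx fy q i)
  case Nil thus ?case by simp
next
  case (Cons e ws)
  obtain xs2 ys2 fx2 fy2 q2 i2 where s: "la_step f c B tb (xs,ys,fx,fy,q,i) e = (xs2,ys2,fx2,fy2,q2,i2)"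
    by (cases "la_step f c B tb (xs,ys,fx,fy,q,i) e") auto
  have "Inv (insert e D) xs2 ys2 fx2 fy2" using Inv_step[OF Cons.prems(1) _ _ s] Cons.prems by auto
  then have "Inv (insert e D \<union> set ws) xs' ys' fx' fy'"
    using Cons.IH[of "insert e D" xs2 ys2 fx2 fy2 q2 i2] Cons.prems s by auto
  thus ?case by simp
qed

end

lemma q_step: "la_step f c B tb (xs,ys,fx,fy,q,i) e = (xs',ys',fx',fy',q',i') \<Longrightarrow> q' = q + 2"
  unfolding la_step_def Let_def by (auto split: if_splits)

lemma q_loop: "foldl (la_step f c B tb) (xs,ys,fx,fy,q,i) ws = (xs',ys',fx',fy',q',i') \<Longrightarrow>
   q' = q + 2 * length ws"
proof (induction ws arbitrary: xs ys fx fy q i)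
  case Nil thus ?case by simp
next
  case (Cons e ws)
  obtain xs2 ys2 fx2 fy2 q2 i2 where s: "la_step f c B tb (xs,ys,fx,fy,q,i) e = (xs2,ys2,fx2,fy2,q2,i2)"
    by (cases "la_step f c B tb (xs,ys,fx,fy,q,i) e") auto
  show ?case using Cons.IH[of xs2 ys2 fx2 fy2 q2 i2] Cons.prems s q_step[OF s] by simp
qed

lemma emax_fold:
  fixes f :: "'a set \<Rightarrow> real"
  shows "foldl (\<lambda>(b, fb, q) e. let fe = f {e} in if fb < fe then (e, fe, Suc q) else (b, fb, Suc q))
     (b, f {b}, q) ys = (b', fb', q') \<Longrightarrow>
   fb' = f {b'} \<and> b' \<in> insert b (set ys) \<and> (\<forall>e\<in>insert b (set ys). f {e} \<le> fb') \<and> q' = q + length ys"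
proof (induction ys arbitrary: b q)
  case Nil thus ?case by auto
next
  case (Cons e ys)
  define b2 where "b2 = (if f {b} < f {e} then e else b)"
  have s: "(\<lambda>(b, fb, q) e. let fe = f {e} in if fb < fe then (e, fe, Suc q) else (b, fb, Suc q))
     (b, f {b}, q) e = (b2, f {b2}, Suc q)" unfolding b2_def Let_def by auto
  have IH: "fb' = f {b'} \<and> b' \<in> insert b2 (set ys) \<and> (\<forall>e\<in>insert b2 (set ys). f {e} \<le> fb') \<and> Suc q + length ys = q'"
    using Cons.IH[of b2 "Suc q"] Cons.prems s by auto
  have "f {b} \<le> f {b2}" "f {e} \<le> f {b2}" unfolding b2_def by auto
  moreover have "b2 \<in> {b, e}" unfolding b2_def by auto
  ultimately show ?case using IH by auto
qed

lemma emax: "vs \<noteq> [] \<Longrightarrow> emax_scan f vs = (em, fem, q) \<Longrightarrow>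
  fem = f {em} \<and> em \<in> set vs \<and> (\<forall>e\<in>set vs. f {e} \<le> fem) \<and> q = length vs"
  unfolding emax_scan_def using emax_fold[of f "hd vs" 1 "tl vs" em fem q]
  by (cases vs) auto


context inst begin

lemma main:
  assumes Vvs: "V = set vs" and dvs: "distinct vs" and ne: "vs \<noteq> []"
  shows "fst (LA f c B tb vs) \<subseteq> V \<and> sum c (fst (LA f c B tb vs)) \<le> B \<and>
         opt f c B V \<le> 19 * f (fst (LA f c B tb vs))"
proof -
  obtain em fem q1 where E: "emax_scan f vs = (em, fem, q1)" by (cases "emax_scan f vs") auto
  obtain xs ys fx fy q2 i where L: "la_loop f c B tb vs = (xs,ys,fx,fy,q2,i)"
    by (cases "la_loop f c B tb vs") auto
  have em: "fem = f {em}" "em \<in> V" "\<forall>e\<in>V. f {e} \<le> fem" using emax[OF ne E] Vvs by auto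
  define W where "W = filter (\<lambda>e. c e \<le> B / 2) vs"
  have setW: "set W = {e\<in>V. c e \<le> B/2}" unfolding W_def Vvs by auto
  have I0: "Inv {} [] [] (f {}) (f {})" unfolding Inv_def using f0 by auto
  have "Inv ({} \<union> set W) xs ys fx fy"
    using Inv_loop[OF I0, of W tb 1 0 xs ys fx fy q2 i] L dvs setW unfolding la_loop_def W_def
    by auto
  hence I: "Inv (set W) xs ys fx fy" by simp
  let ?X = "set xs" let ?Y = "set ys"
  from I obtain gX gY where
    b: "fx = f ?X" "fy = f ?Y" "set W \<subseteq> V" "?X \<subseteq> set W" "?Y \<subseteq> set W" "?X \<inter> ?Y = {}" "chn f c B xs" "chn f c B ys"
    and g: "\<forall>u\<in>?X. 0 \<le> gX u" "\<forall>u\<in>?Y. 0 \<le> gY u" "sum gX ?X = f ?X" "sum gY ?Y = f ?Y"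
    and QX: "\<forall>u\<in>set W - ?X. \<exists>P\<subseteq>?X. f (insert u P) - f P \<le> c u * f ?X / B + (if u\<in>?Y then gY u else 0)"
    and QY: "\<forall>u\<in>set W - ?Y. \<exists>P\<subseteq>?Y. f (insert u P) - f P \<le> c u * f ?Y / B + (if u\<in>?X then gX u else 0)"
    unfolding Inv_def by blast
  have XV: "?X \<subseteq> V" "?Y \<subseteq> V" using b by auto
  define X' where "X' = last_feasible c B xs"
  define Y' where "Y' = last_feasible c B ys"
  have lX: "X' \<subseteq> ?X \<and> sum c X' \<le> B \<and> f ?X \<le> 3 * f X'"
    unfolding X'_def using lf[OF b(7) XV(1)] b(4) setW by auto
  have lY: "Y' \<subseteq> ?Y \<and> sum c Y' \<le> B \<and> f ?Y \<le> 3 * f Y'"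
    unfolding Y'_def using lf[OF b(8) XV(2)] b(5) setW by auto
  define S where "S = fst (LA f c B tb vs)"
  have Seq: "S = (if f Y' \<le> f X' \<and> fem \<le> f X' then X' else if fem \<le> f Y' then Y' else {em})"
    unfolding S_def LA_def E L X'_def Y'_def Let_def by (simp split: if_split)
  have cem: "sum c {em} \<le> B" using cle em by simp
  have Sprop: "S \<subseteq> V \<and> sum c S \<le> B \<and> f X' \<le> f S \<and> f Y' \<le> f S \<and> fem \<le> f S"
    using Seq lX lY XV em cem by (auto split: if_splits)
  define F where "F = {f T | T. T \<subseteq> V \<and> sum c T \<le> B}"
  have "F = f ` {T. T \<subseteq> V \<and> sum c T \<le> B}" unfolding F_def by auto
  hence finF: "finite F" using fin by simp
  have "f {} \<in> F" unfolding F_def using Bpos by auto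
  hence "Max F \<in> F" using finF Max_in by blast
  then obtain Op where Op: "Op \<subseteq> V" "sum c Op \<le> B" "opt f c B V = f Op"
    unfolding F_def opt_def by auto
  have finO: "finite Op" using Op fin finite_subset by blast
  define O1 where "O1 = Op \<inter> set W"
  define O2 where "O2 = Op - set W"
  have O1V: "O1 \<subseteq> V" "O2 \<subseteq> V" using Op unfolding O1_def O2_def by auto
  have "f Op \<le> f O1 + f O2"
    using subadd[OF O1V] unfolding O1_def O2_def by (metis Diff_disjoint Int_Diff_Un inf_commute inf_left_commute inf_bot_right)
  moreover have "f O2 \<le> fem"
  proof (cases "O2 = {}")
    case True thus ?thesis using f0 em nonneg[of "{em}"] by auto
  next
    case False
    then obtain a where a: "a \<in> O2" by blast
    have "O2 = {a}"
    proof (rule ccontr)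
      assume "O2 \<noteq> {a}"
      then obtain a2 where a2: "a2 \<in> O2" "a2 \<noteq> a" using a by blast
      have big: "c a > B/2" "c a2 > B/2" using a a2 setW O1V unfolding O2_def by auto
      have "sum c {a, a2} \<le> sum c Op"
        using a a2 finO Op(1) unfolding O2_def by (intro sum_mono2) (auto dest: cpos intro: less_imp_le)
      then show False using a2 big Op(2) by simp
    qed
    thus ?thesis using em a O1V by auto
  qed
  moreover have "f O1 \<le> f (O1 \<union> ?X) + f (O1 \<union> ?Y)"
  proof -
    have "(O1 \<union> ?X) \<inter> (O1 \<union> ?Y) = O1" using b(6) by auto
    moreover have "0 \<le> f ((O1 \<union> ?X) \<union> (O1 \<union> ?Y))" using O1V XV nonneg by auto
    ultimately show ?thesis using submod[of "O1 \<union> ?X" "O1 \<union> ?Y"] O1V XV by auto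
  qed
  moreover have "f (O1 \<union> ?X) \<le> 2 * f ?X + f ?Y"
  proof -
    let ?A = "O1 - ?X"
    define h where "h = (\<lambda>u. if u \<in> ?Y then gY u else 0)"
    have cA: "sum c ?A \<le> B"
      using sum_mono2[of Op ?A c] finO Op O1V cpos unfolding O1_def by (force intro: less_imp_le)
    have "f (?A \<union> ?X) \<le> 2 * f ?X + sum h ?A"
      apply (rule side_bound)
      using finO O1V XV cA QX unfolding O1_def h_def by auto
    moreover have "sum h ?A \<le> f ?Y"
    proof -
      have "sum h ?A = sum gY (?A \<inter> ?Y)" unfolding h_def
        using finO unfolding O1_def by (simp add: sum.inter_restrict[symmetric] )
      also have "\<dots> \<le> sum gY ?Y" using g by (intro sum_mono2) auto
      finally show ?thesis using g by simp
    qed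
    moreover have "?A \<union> ?X = O1 \<union> ?X" by auto
    ultimately show ?thesis by simp
  qed
  moreover have "f (O1 \<union> ?Y) \<le> 2 * f ?Y + f ?X"
  proof -
    let ?A = "O1 - ?Y"
    define h where "h = (\<lambda>u. if u \<in> ?X then gX u else 0)"
    have cA: "sum c ?A \<le> B"
      using sum_mono2[of Op ?A c] finO Op O1V cpos unfolding O1_def by (force intro: less_imp_le)
    have "f (?A \<union> ?Y) \<le> 2 * f ?Y + sum h ?A"
      apply (rule side_bound)
      using finO O1V XV cA QY unfolding O1_def h_def by auto
    moreover have "sum h ?A \<le> f ?X"
    proof -
      have "sum h ?A = sum gX (?A \<inter> ?X)" unfolding h_def
        using finO unfolding O1_def by (simp add: sum.inter_restrict[symmetric] )
      also have "\<dots> \<le> sum gX ?X" using g by (intro sum_mono2) auto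
      finally show ?thesis using g by simp
    qed
    moreover have "?A \<union> ?Y = O1 \<union> ?Y" by auto
    ultimately show ?thesis by simp
  qed
  ultimately have "opt f c B V \<le> 3 * f ?X + 3 * f ?Y + fem" using Op by linarith
  then have "opt f c B V \<le> 19 * f S" using lX lY Sprop by linarith
  then show ?thesis using Sprop unfolding S_def by auto
qed

end


lemma queries:
  assumes ne: "vs \<noteq> []"
  shows "real (snd (LA f c B tb vs)) \<le> 6 * real (length vs)"
proof -
  obtain em fem q1 where E: "emax_scan f vs = (em, fem, q1)" by (cases "emax_scan f vs") auto
  obtain xs ys fx fy q2 i where L: "la_loop f c B tb vs = (xs,ys,fx,fy,q2,i)"
    by (cases "la_loop f c B tb vs") auto
  have q1: "q1 = length vs" using emax[OF ne E] by auto
  have q2: "q2 = 1 + 2 * length (filter (\<lambda>e. c e \<le> B / 2) vs)"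
    using q_loop[of f c B tb "[]" "[]" "f {}" "f {}" 1 0] L unfolding la_loop_def by auto
  have "length (filter (\<lambda>e. c e \<le> B / 2) vs) \<le> length vs" by (rule length_filter_le)
  hence q2': "q2 \<le> 1 + 2 * length vs" using q2 by simp
  have "snd (LA f c B tb vs) = q1 + q2 + 2"
    unfolding LA_def E L Let_def by (simp split: if_split)
  moreover have "1 \<le> length vs" using ne by (cases vs) auto
  ultimately have "snd (LA f c B tb vs) \<le> 6 * length vs" using q1 q2' by simp
  thus ?thesis by (simp add: of_nat_le_iff[symmetric])
qed

theorem theorem1:
  shows "(\<exists>C::real. \<forall>(f::'a set \<Rightarrow> real) c B tb vs.
            valid_instance f c B vs \<longrightarrow> real (snd (LA f c B tb vs)) \<le> C * real (length vs))
       \<and> (\<forall>(f::'a set \<Rightarrow> real) c B tb vs. valid_instance f c B vs \<longrightarrow>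
            fst (LA f c B tb vs) \<subseteq> set vs \<and>
            sum c (fst (LA f c B tb vs)) \<le> B \<and>
            opt f c B (set vs) \<le> 19 * f (fst (LA f c B tb vs)))"
proof (intro conjI allI impI)
  show "\<exists>C::real. \<forall>(f::'a set \<Rightarrow> real) c B tb vs.
            valid_instance f c B vs \<longrightarrow> real (snd (LA f c B tb vs)) \<le> C * real (length vs)"
    by (rule exI[of _ 6]) (auto simp: valid_instance_def intro: queries)
next
  fix f :: "'a set \<Rightarrow> real" and c B tb and vs :: "'a list"
  assume v: "valid_instance f c B vs"
  then interpret inst f c B "set vs"
    unfolding valid_instance_def by unfold_locales auto
  have "distinct vs" "vs \<noteq> []" using v unfolding valid_instance_def by auto
  from main[OF refl this, of tb]
  show "fst (LA f c B tb vs) \<subseteq> set vs" "sum c (fst (LA f c B tb vs)) \<le> B"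
       "opt f c B (set vs) \<le> 19 * f (fst (LA f c B tb vs))" by auto
qed

end
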